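(* Let $K$ be a finite ordered simplicial complex in $\mathbb{R}^N$ and let $\{U_i\}$ be a locally finite cover of $\mathbb{R}^N$ by convex open sets. Then for all sufficiently large $\ell$, the subcomplexes $K_\ell\cap U_i$ are nice and cover $K_\ell$ (every simplex of $K_\ell$ lies in some $K_\ell\cap U_i$).
   Context: A simplicial complex is a locally finite set of linear simplices in $\mathbb{R}^N$ closed under faces with pairwise intersections common faces; ordered means vertices totally ordered. $K_\ell$ is the $\ell$th crystalline subdivision: for an ordered $m$-simplex $\langle v_0,\dots,v_m\rangle$, $m>0$, let $\iota$ be affine into $[0,1]^m$ with $\iota(v_j)=(0,\dots,0,1,\dots,1)$ ($j$ zeros), subdivide $[0,1]^m$ into $2^{\ell m}$ cubes of side $2^{-\ell}$, each into the $m!$ rescaled translates of $\{0\le x_{\pi(1)}\le\dots\le x_{\pi(m)}\le1\}$, and pull back via $\iota$. $K\cap U$ is the maximal subcomplex of $K$ contained in $U$. For a subcomplex $K'$ and $\Delta\in K$, $\Delta\cap K'$ denotes the simplices of $K'$ that are faces of $\Delta$; $\operatorname{star}(K')$ is the set of simplices sharing a face with some simplex of $K'$, with their faces; $K'$ is nice if for every $\Delta\in\operatorname{star}(K')$, $\Delta\cap K'$ is a single face of $\Delta$ (with its faces). *)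

theory Defs
  imports "HOL-Analysis.Analysis"
begin

text \<open>Simplicial complexes are taken in the sense of the library predicate
  simplicial_complex (HOL-Analysis, Polytope): a finite set of geometric simplices
  (point sets), closed under faces (including the empty face), with pairwise
  intersections being common faces.\<close>

definition simplex_vertices :: "'a::euclidean_space set \<Rightarrow> 'a set" where
  "simplex_vertices S = {v. v extreme_point_of S}"

definition complex_vertices :: "'a::euclidean_space set set \<Rightarrow> 'a set" where
  "complex_vertices K = (\<Union>S\<in>K. simplex_vertices S)"

definition ordered_complex :: "'a::euclidean_space set set \<Rightarrow> 'a rel \<Rightarrow> bool" where
  "ordered_complex K r \<longleftrightarrow> simplicial_complex K \<and> linear_order_on (complex_vertices K) r"

text \<open>Points of [0,1]^m are functions nat => real with coordinates 1..m.
  The image of the ordered simplex under iota is the region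
  0 <= x_1 <= ... <= x_m <= 1.\<close>
definition cryst_region :: "nat \<Rightarrow> (nat \<Rightarrow> real) \<Rightarrow> bool" where
  "cryst_region m x \<longleftrightarrow>
     (\<forall>i j. 1 \<le> i \<and> i \<le> j \<and> j \<le> m \<longrightarrow> x i \<le> x j) \<and>
     (\<forall>i. 1 \<le> i \<and> i \<le> m \<longrightarrow> 0 \<le> x i \<and> x i \<le> 1)"

text \<open>Inverse of iota: the affine map with (0^j,1^(m-j)) |-> v_j.\<close>
definition cryst_param :: "(nat \<Rightarrow> 'a::euclidean_space) \<Rightarrow> nat \<Rightarrow> (nat \<Rightarrow> real) \<Rightarrow> 'a" where
  "cryst_param vs m x = vs m + (\<Sum>i\<in>{1..m}. x i *\<^sub>R (vs (i - 1) - vs i))"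

text \<open>The j-th vertex (j = 0..m) of the small simplex in the cube with lower corner
  k/2^l (k integer vector) associated with the permutation p of {1..m}, i.e. of
  the rescaled translate of {0 <= y_p(1) <= ... <= y_p(m) <= 1}.\<close>
definition cube_simplex_vertex :: "nat \<Rightarrow> nat \<Rightarrow> (nat \<Rightarrow> int) \<Rightarrow> (nat \<Rightarrow> nat) \<Rightarrow> nat \<Rightarrow> (nat \<Rightarrow> real)" where
  "cube_simplex_vertex m l k p j =
     (\<lambda>i. (real_of_int (k i) + (if i \<in> p ` {j+1..m} then 1 else 0)) / 2 ^ l)"

text \<open>The top-dimensional simplices of the l-th crystalline subdivision of the
  simplex S of the ordered complex (K, r): pull backs of the small cube simplices
  lying in the image of S.\<close>
definition cryst_pieces :: "'a::euclidean_space rel \<Rightarrow> nat \<Rightarrow> 'a set \<Rightarrow> 'a set set" where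
  "cryst_pieces r l S =
     {T. \<exists>m vs k p.
           card (simplex_vertices S) = Suc m \<and>
           vs ` {0..m} = simplex_vertices S \<and>
           (\<forall>i<m. (vs i, vs (Suc i)) \<in> r) \<and>
           bij_betw p {1..m} {1..m} \<and>
           (\<forall>j\<le>m. cryst_region m (cube_simplex_vertex m l k p j)) \<and>
           T = convex hull {cryst_param vs m (cube_simplex_vertex m l k p j) | j. j \<le> m}}"

definition cryst_subdiv :: "'a::euclidean_space set set \<Rightarrow> 'a rel \<Rightarrow> nat \<Rightarrow> 'a set set" where
  "cryst_subdiv K r l = {F. \<exists>S\<in>K. \<exists>T\<in>cryst_pieces r l S. F face_of T}"

definition complex_restrict :: "'a::euclidean_space set set \<Rightarrow> 'a set \<Rightarrow> 'a set set" where
  "complex_restrict K U = {S\<in>K. S \<subseteq> U}"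

definition simplex_meet :: "'a::euclidean_space set \<Rightarrow> 'a set set \<Rightarrow> 'a set set" where
  "simplex_meet D K' = {T\<in>K'. T face_of D}"

definition complex_star :: "'a::euclidean_space set set \<Rightarrow> 'a set set \<Rightarrow> 'a set set" where
  "complex_star K K' =
     {F. \<exists>D\<in>K. F face_of D \<and>
          (\<exists>T\<in>K'. \<exists>G. G \<noteq> {} \<and> G face_of D \<and> G face_of T)}"

definition nice_subcomplex :: "'a::euclidean_space set set \<Rightarrow> 'a set set \<Rightarrow> bool" where
  "nice_subcomplex K K' \<longleftrightarrow>
     (\<forall>D\<in>complex_star K K'. \<exists>F. F face_of D \<and> simplex_meet D K' = {G. G face_of F})"

definition locally_finite_family :: "('i \<Rightarrow> 'a::topological_space set) \<Rightarrow> bool" where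
  "locally_finite_family U \<longleftrightarrow>
     (\<forall>x. \<exists>N. open N \<and> x \<in> N \<and> finite {i. U i \<inter> N \<noteq> {}})"

end

theory Submission
  imports Defs
begin

definition aif :: "(nat \<Rightarrow> 'a::real_vector) \<Rightarrow> nat \<Rightarrow> bool" where
  "aif f n \<longleftrightarrow> (\<forall>u. sum u {..n} = 0 \<and> (\<Sum>j\<le>n. u j *\<^sub>R f j) = 0 \<longrightarrow> (\<forall>j\<le>n. u j = 0))"

lemma aif_inj:
  assumes "aif f n" shows "inj_on f {..n}"
proof (rule inj_onI, rule ccontr)
  fix i j assume ij: "i \<in> {..n}" "j \<in> {..n}" "f i = f j" "i \<noteq> j"
  define u where "u = (\<lambda>k. (if k = i then 1 else 0) - (if k = j then 1 else (0::real)))"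
  have "sum u {..n} = 0" using ij by (simp add: u_def sum_subtractf)
  moreover have "(\<Sum>k\<le>n. u k *\<^sub>R f k) = 0"
    using ij by (simp add: u_def scaleR_left_diff_distrib sum_subtractf if_distrib[of "\<lambda>c. c *\<^sub>R _"] cong: if_cong)
  ultimately have "u i = 0" using assms ij unfolding aif_def by blast
  then show False using ij by (simp add: u_def)
qed

lemma aif_indep:
  assumes "aif f n" shows "\<not> affine_dependent (f ` {..n})"
proof
  assume "affine_dependent (f ` {..n})"
  then obtain U where U: "sum U (f ` {..n}) = 0" "\<exists>v\<in>f ` {..n}. U v \<noteq> 0"
      "(\<Sum>v\<in>f ` {..n}. U v *\<^sub>R v) = 0"
    using affine_dependent_explicit_finite[of "f ` {..n}"] by auto
  have inj: "inj_on f {..n}" using aif_inj[OF assms] .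
  have "sum (U \<circ> f) {..n} = 0" using U(1) sum.reindex[OF inj, of U] by simp
  moreover have "(\<Sum>j\<le>n. (U \<circ> f) j *\<^sub>R f j) = 0" using U(3) sum.reindex[OF inj, of "\<lambda>v. U v *\<^sub>R v"] by simp
  ultimately have "\<forall>j\<le>n. (U \<circ> f) j = 0" using assms unfolding aif_def by blast
  then show False using U(2) by auto
qed

lemma indep_aif:
  assumes "\<not> affine_dependent (f ` {..n})" "inj_on f {..n}" shows "aif f n"
  unfolding aif_def
proof (intro allI, rule impI)
  fix u assume u: "sum u {..n} = 0 \<and> (\<Sum>j\<le>n. u j *\<^sub>R f j) = 0"
  define U where "U = u \<circ> inv_into {..n} f"
  have UF: "\<And>j. j \<le> n \<Longrightarrow> U (f j) = u j" using assms(2) by (simp add: U_def inv_into_f_f)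
  have "sum U (f ` {..n}) = sum u {..n}"
    using sum.reindex[OF assms(2), of U] UF by (simp add: comp_def)
  moreover have "(\<Sum>v\<in>f ` {..n}. U v *\<^sub>R v) = (\<Sum>j\<le>n. u j *\<^sub>R f j)"
    using sum.reindex[OF assms(2), of "\<lambda>v. U v *\<^sub>R v"] UF by (simp add: comp_def)
  ultimately have "sum U (f ` {..n}) = 0" "(\<Sum>v\<in>f ` {..n}. U v *\<^sub>R v) = 0" using u by auto
  then have "\<forall>v\<in>f ` {..n}. U v = 0"
    using assms(1) unfolding affine_dependent_explicit_finite[OF finite_imageI[OF finite_atMost]] by blast
  then show "\<forall>j\<le>n. u j = 0" using UF by auto
qed

lemma edge_sum:
  "(\<Sum>i\<in>{1..m}. c i *\<^sub>R (vs (i-1) - vs i)) =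
     (\<Sum>i\<le>m. (c (Suc i) - c i) *\<^sub>R vs i) - c (Suc m) *\<^sub>R vs m + c 0 *\<^sub>R (vs 0 :: 'a::real_vector)"
proof (induction m)
  case 0 then show ?case by (simp add: algebra_simps)
next
  case (Suc m)
  have "{1..Suc m} = insert (Suc m) {1..m}" by auto
  then show ?case using Suc by (simp add: algebra_simps)
qed

lemma edges_indep:
  assumes "aif vs m" "(\<Sum>i\<in>{1..m}. c i *\<^sub>R (vs (i-1) - vs i)) = 0"
  shows "\<forall>i\<in>{1..m}. c i = 0"
proof -
  define c' where "c' i = (if 1 \<le> i \<and> i \<le> m then c i else 0)" for i
  define u where "u i = c' (Suc i) - c' i" for i
  have "(\<Sum>i\<in>{1..m}. c' i *\<^sub>R (vs (i-1) - vs i)) = (\<Sum>i\<in>{1..m}. c i *\<^sub>R (vs (i-1) - vs i))"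
    by (rule sum.cong) (auto simp: c'_def)
  then have "(\<Sum>i\<le>m. u i *\<^sub>R vs i) = 0"
    using edge_sum[where c=c' and m=m and vs=vs] assms(2) by (simp add: u_def c'_def)
  moreover have "sum u {..m} = 0"
    using sum_lessThan_telescope[of c' "Suc m"] by (simp add: u_def c'_def lessThan_Suc_atMost)
  ultimately have u0: "\<forall>i\<le>m. u i = 0" using assms(1) unfolding aif_def by blast
  have "i \<le> Suc m \<Longrightarrow> c' i = 0" for i
  proof (induction i)
    case 0 then show ?case by (simp add: c'_def)
  next
    case (Suc i) then show ?case using u0[rule_format, of i] by (simp add: u_def)
  qed
  then show ?thesis by (metis atLeastAtMost_iff c'_def le_SucI)
qed

lemma cryst_comb:
  "(\<Sum>j\<le>n. u j *\<^sub>R cryst_param vs m (w j)) =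
   (sum u {..n}) *\<^sub>R vs m + (\<Sum>i\<in>{1..m}. (\<Sum>j\<le>n. u j * w j i) *\<^sub>R (vs (i-1) - vs i))"
proof -
  have "(\<Sum>j\<le>n. u j *\<^sub>R cryst_param vs m (w j)) =
     (\<Sum>j\<le>n. u j *\<^sub>R vs m) + (\<Sum>j\<le>n. \<Sum>i\<in>{1..m}. (u j * w j i) *\<^sub>R (vs (i-1) - vs i))"
    by (simp add: cryst_param_def scaleR_add_right sum.distrib scaleR_sum_right)
  also have "\<dots> = (sum u {..n}) *\<^sub>R vs m + (\<Sum>i\<in>{1..m}. \<Sum>j\<le>n. (u j * w j i) *\<^sub>R (vs (i-1) - vs i))"
    by (simp add: scaleR_sum_left sum.swap[of _ "{..n}"])
  also have "\<dots> = (sum u {..n}) *\<^sub>R vs m + (\<Sum>i\<in>{1..m}. (\<Sum>j\<le>n. u j * w j i) *\<^sub>R (vs (i-1) - vs i))"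
    by (simp add: scaleR_sum_left)
  finally show ?thesis .
qed

lemma piece_aif:
  assumes "aif vs m" "bij_betw p {1..m} {1..m}"
  shows "aif (\<lambda>j. cryst_param vs m (cube_simplex_vertex m l k p j)) m"
  unfolding aif_def
proof (intro allI, rule impI)
  define w where "w = cube_simplex_vertex m l k p"
  fix u assume u: "sum u {..m} = 0 \<and> (\<Sum>j\<le>m. u j *\<^sub>R cryst_param vs m (cube_simplex_vertex m l k p j)) = 0"
  then have "(\<Sum>i\<in>{1..m}. (\<Sum>j\<le>m. u j * w j i) *\<^sub>R (vs (i-1) - vs i)) = 0"
    using cryst_comb[where u=u and n=m and vs=vs and m=m and w=w] by (simp add: w_def)
  then have c0: "\<forall>i\<in>{1..m}. (\<Sum>j\<le>m. u j * w j i) = 0"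
    using edges_indep[OF assms(1), where c="\<lambda>i. \<Sum>j\<le>m. u j * w j i"] by simp
  have inj: "inj_on p {1..m}" using assms(2) bij_betw_def by blast
  define s where "s t = (\<Sum>j<t. u j)" for t
  have st: "s t = 0" if "t \<le> Suc m" for t
  proof (cases "t = 0 \<or> t = Suc m")
    case True then show ?thesis using u by (auto simp: s_def lessThan_Suc_atMost)
  next
    case False
    then have t: "t \<in> {1..m}" using that by auto
    have pt: "p t \<in> {1..m}" using bij_betw_apply[OF assms(2) t] .
    have mem: "p t \<in> p ` {Suc j..m} \<longleftrightarrow> j < t" for j
    proof
      assume "p t \<in> p ` {Suc j..m}"
      then obtain s where "s \<in> {Suc j..m}" "p t = p s" by auto
      then have "s = t" using inj t by (auto dest: inj_onD)
      then show "j < t" using \<open>s \<in> {Suc j..m}\<close> by auto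
    qed (use t in auto)
    have "\<And>j. u j * w j (p t) = (u j * real_of_int (k (p t)) + (if j < t then u j else 0)) / 2 ^ l"
      by (simp add: w_def cube_simplex_vertex_def mem ring_distribs)
    then have "(\<Sum>j\<le>m. u j * w j (p t)) = ((\<Sum>j\<le>m. u j) * real_of_int (k (p t)) + (\<Sum>j\<le>m. if j < t then u j else 0)) / 2 ^ l"
      by (simp add: sum_divide_distrib[symmetric] sum.distrib sum_distrib_right)
    then have "(\<Sum>j\<le>m. if j < t then u j else 0) = 0" using c0 pt u by simp
    moreover have "(\<Sum>j\<le>m. if j < t then u j else 0) = (\<Sum>j\<in>{..m} \<inter> {..<t}. u j)"
      by (simp add: sum.inter_restrict)
    moreover have "{..m} \<inter> {..<t} = {..<t}" using t by auto
    ultimately show ?thesis by (simp add: s_def)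
  qed
  show "\<forall>j\<le>m. u j = 0"
  proof (intro allI impI)
    fix j assume "j \<le> m"
    then have "s (Suc j) = 0" "s j = 0" using st by auto
    then show "u j = 0" by (simp add: s_def)
  qed
qed

lemma simplex_verts:
  assumes "n simplex S"
  shows "\<not> affine_dependent (simplex_vertices S)" "simplex_vertices S \<subseteq> S"
proof -
  obtain C where C: "\<not> affine_dependent C" "S = convex hull C" using assms simplex_def by blast
  have "simplex_vertices S \<subseteq> C" using C(2) extreme_point_of_convex_hull
    by (auto simp: simplex_vertices_def)
  then show "\<not> affine_dependent (simplex_vertices S)" using C(1) affine_independent_subset by blast
  show "simplex_vertices S \<subseteq> S" by (auto simp: simplex_vertices_def extreme_point_of_def)
qed

lemma piece_data:
  assumes "T \<in> cryst_pieces r l S"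
  obtains m vs k p where "card (simplex_vertices S) = Suc m" "vs ` {..m} = simplex_vertices S"
    "bij_betw p {1..m} {1..m}" "\<forall>j\<le>m. cryst_region m (cube_simplex_vertex m l k p j)"
    "T = convex hull ((\<lambda>j. cryst_param vs m (cube_simplex_vertex m l k p j)) ` {..m})"
proof -
  from assms obtain m vs k p where h: "card (simplex_vertices S) = Suc m" "vs ` {0..m} = simplex_vertices S"
    "bij_betw p {1..m} {1..m}" "\<forall>j\<le>m. cryst_region m (cube_simplex_vertex m l k p j)"
    "T = convex hull {cryst_param vs m (cube_simplex_vertex m l k p j) | j. j \<le> m}"
    unfolding cryst_pieces_def by blast
  have eq: "{cryst_param vs m (cube_simplex_vertex m l k p j) | j. j \<le> m}
      = (\<lambda>j. cryst_param vs m (cube_simplex_vertex m l k p j)) ` {..m}" by auto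
  show ?thesis
  proof (rule that[OF h(1) _ h(3) h(4)])
    show "vs ` {..m} = simplex_vertices S" using h(2) by (simp add: atLeast0AtMost)
    show "T = convex hull ((\<lambda>j. cryst_param vs m (cube_simplex_vertex m l k p j)) ` {..m})"
      using h(5) eq by simp
  qed
qed

lemma piece_indep:
  assumes "n simplex S" "T \<in> cryst_pieces r l S"
  shows "\<exists>P. \<not> affine_dependent P \<and> T = convex hull P"
proof -
  obtain m vs k p where h: "card (simplex_vertices S) = Suc m" "vs ` {..m} = simplex_vertices S"
    "bij_betw p {1..m} {1..m}"
    "T = convex hull ((\<lambda>j. cryst_param vs m (cube_simplex_vertex m l k p j)) ` {..m})"
    using piece_data[OF assms(2)] by metis
  have inj: "inj_on vs {..m}" using h(1,2) by (intro eq_card_imp_inj_on) auto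
  have "aif vs m" using indep_aif[OF _ inj] h(2) simplex_verts(1)[OF assms(1)] by simp
  then have "aif (\<lambda>j. cryst_param vs m (cube_simplex_vertex m l k p j)) m"
    using piece_aif h(3) by blast
  then show ?thesis using aif_indep h(4) by blast
qed

lemma nice_piece:
  fixes P :: "'a::euclidean_space set"
  assumes "\<not> affine_dependent P" "D face_of convex hull P" "convex U"
  shows "\<exists>F. F face_of D \<and> {G. G face_of D \<and> G \<subseteq> U} = {G. G face_of F}"
proof -
  obtain Q where Q: "Q \<subseteq> P" "D = convex hull Q"
    using face_of_convex_hull_affine_independent[OF assms(1), of D] assms(2) by blast
  have iQ: "\<not> affine_dependent Q" using Q(1) assms(1) affine_independent_subset by blast
  have iQU: "\<not> affine_dependent (Q \<inter> U)" using iQ affine_independent_subset[of Q "Q \<inter> U"] by blast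
  have sub: "convex hull c \<subseteq> U \<longleftrightarrow> c \<subseteq> U" for c
  proof
    assume "convex hull c \<subseteq> U" then show "c \<subseteq> U" using hull_subset[of c convex] by (rule order_trans[rotated])
  next
    assume "c \<subseteq> U" then show "convex hull c \<subseteq> U" using assms(3) by (rule hull_minimal)
  qed
  have F: "G face_of convex hull Q \<longleftrightarrow> (\<exists>c. c \<subseteq> Q \<and> G = convex hull c)" for G
    using face_of_convex_hull_affine_independent[OF iQ] .
  have F2: "G face_of convex hull (Q \<inter> U) \<longleftrightarrow> (\<exists>c. c \<subseteq> Q \<inter> U \<and> G = convex hull c)" for G
    using face_of_convex_hull_affine_independent[OF iQU] .
  show ?thesis
  proof (intro exI conjI)
    show "convex hull (Q \<inter> U) face_of D"
      unfolding Q(2) F by (intro exI[of _ "Q \<inter> U"]) simp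
    show "{G. G face_of D \<and> G \<subseteq> U} = {G. G face_of convex hull (Q \<inter> U)}"
      unfolding Q(2) F F2
    proof (intro equalityI subsetI)
      fix G assume "G \<in> {G. (\<exists>c. c \<subseteq> Q \<and> G = convex hull c) \<and> G \<subseteq> U}"
      then obtain c where "c \<subseteq> Q" "G = convex hull c" "G \<subseteq> U" by blast
      then show "G \<in> {G. \<exists>c. c \<subseteq> Q \<inter> U \<and> G = convex hull c}" using sub[of c] by auto
    next
      fix G assume "G \<in> {G. \<exists>c. c \<subseteq> Q \<inter> U \<and> G = convex hull c}"
      then obtain c where "c \<subseteq> Q \<inter> U" "G = convex hull c" by blast
      then show "G \<in> {G. (\<exists>c. c \<subseteq> Q \<and> G = convex hull c) \<and> G \<subseteq> U}" using sub[of c] by auto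
    qed
  qed
qed

lemma sum_edge_norm:
  fixes e :: "nat \<Rightarrow> 'a::real_normed_vector"
  assumes "\<forall>i\<in>{1..m}. \<bar>y i\<bar> \<le> c" "\<forall>i\<in>{1..m}. norm (e i) \<le> E" "0 \<le> c"
  shows "norm (\<Sum>i\<in>{1..m}. y i *\<^sub>R e i) \<le> real m * (c * E)"
proof -
  have "norm (\<Sum>i\<in>{1..m}. y i *\<^sub>R e i) \<le> (\<Sum>i\<in>{1..m}. c * E)"
  proof (rule sum_norm_le)
    fix i assume i: "i \<in> {1..m}"
    have "norm (y i *\<^sub>R e i) = \<bar>y i\<bar> * norm (e i)" by simp
    also have "\<dots> \<le> c * E" using assms i by (intro mult_mono) auto
    finally show "norm (y i *\<^sub>R e i) \<le> c * E" .
  qed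
  then show ?thesis by simp
qed

lemma piece_bound:
  assumes "n simplex S" "\<forall>x\<in>S. norm x \<le> B" "card (simplex_vertices S) \<le> M"
    "T \<in> cryst_pieces r l S"
  shows "\<exists>c. norm c \<le> (1 + 2 * real M) * B \<and> T \<subseteq> cball c (2 * real M * B / 2 ^ l)"
proof -
  obtain m vs k p where h: "card (simplex_vertices S) = Suc m" "vs ` {..m} = simplex_vertices S"
    "\<forall>j\<le>m. cryst_region m (cube_simplex_vertex m l k p j)"
    "T = convex hull ((\<lambda>j. cryst_param vs m (cube_simplex_vertex m l k p j)) ` {..m})"
    using piece_data[OF assms(4)] by metis
  define w where "w = cube_simplex_vertex m l k p"
  define a where "a j = cryst_param vs m (w j)" for j
  define e where "e i = vs (i - 1) - vs i" for i
  have vsS: "vs i \<in> S" if "i \<le> m" for i using h(2) simplex_verts(2)[OF assms(1)] that by auto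
  have vsB: "norm (vs i) \<le> B" if "i \<le> m" for i using vsS[OF that] assms(2) by auto
  have B0: "0 \<le> B" using vsB[of 0] norm_ge_zero[of "vs 0"] by linarith
  have eB: "\<forall>i\<in>{1..m}. norm (e i) \<le> 2 * B"
  proof
    fix i assume i: "i \<in> {1..m}"
    have "norm (e i) \<le> norm (vs (i-1)) + norm (vs i)" unfolding e_def by (rule norm_triangle_ineq4)
    also have "\<dots> \<le> 2 * B" using vsB[of "i-1"] vsB[of i] i by force
    finally show "norm (e i) \<le> 2 * B" .
  qed
  have mM: "real m \<le> real M" using h(1) assms(3) by simp
  have am: "norm (a m) \<le> (1 + 2 * real M) * B"
  proof -
    have reg: "\<forall>i\<in>{1..m}. \<bar>w m i\<bar> \<le> 1" using h(3) unfolding w_def cryst_region_def by auto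
    have "norm (a m) \<le> norm (vs m) + norm (\<Sum>i\<in>{1..m}. w m i *\<^sub>R e i)"
      unfolding a_def cryst_param_def e_def by (rule norm_triangle_ineq)
    also have "\<dots> \<le> B + real m * (1 * (2 * B))"
      using vsB[of m] sum_edge_norm[OF reg eB] by auto
    also have "\<dots> \<le> B + real M * (2 * B)" using mM B0 by (simp add: mult_right_mono)
    finally show ?thesis by (simp add: algebra_simps)
  qed
  have dist: "a j \<in> cball (a m) (2 * real M * B / 2 ^ l)" if "j \<le> m" for j
  proof -
    have d: "a m - a j = (\<Sum>i\<in>{1..m}. (w m i - w j i) *\<^sub>R e i)"
      by (simp add: a_def cryst_param_def e_def sum_subtractf scaleR_left_diff_distrib)
    have wd: "\<forall>i\<in>{1..m}. \<bar>w m i - w j i\<bar> \<le> 1 / 2 ^ l"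
    proof
      fix i
      have "w m i - w j i = ((if i \<in> p ` {m+1..m} then 1 else 0) - (if i \<in> p ` {j+1..m} then 1 else 0)) / 2 ^ l"
        by (simp add: w_def cube_simplex_vertex_def diff_divide_distrib[symmetric])
      then show "\<bar>w m i - w j i\<bar> \<le> 1 / 2 ^ l" by (cases "i \<in> p ` {Suc j..m}") simp_all
    qed
    have "norm (a m - a j) \<le> real m * (1 / 2 ^ l * (2 * B))"
      unfolding d by (rule sum_edge_norm[OF wd eB]) simp
    also have "\<dots> \<le> real M * (1 / 2 ^ l * (2 * B))" using mM B0 by (intro mult_right_mono) auto
    finally show ?thesis by (simp add: dist_norm algebra_simps)
  qed
  have "T \<subseteq> cball (a m) (2 * real M * B / 2 ^ l)"
    unfolding h(4) by (rule hull_minimal) (use dist in \<open>auto simp: a_def w_def\<close>)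
  then show ?thesis using am by blast
qed

theorem lemma3p12:
  fixes K :: "'a::euclidean_space set set" and r :: "'a rel" and U :: "'i \<Rightarrow> 'a set"
  assumes "ordered_complex K r"
    and "\<And>i. open (U i)" and "\<And>i. convex (U i)"
    and "(\<Union>i. U i) = UNIV"
    and "locally_finite_family U"
  shows "\<exists>L. \<forall>l\<ge>L.
           (\<forall>i. nice_subcomplex (cryst_subdiv K r l) (complex_restrict (cryst_subdiv K r l) (U i))) \<and>
           (\<forall>S\<in>cryst_subdiv K r l. \<exists>i. S \<in> complex_restrict (cryst_subdiv K r l) (U i))"
proof -
  have sc: "simplicial_complex K" using assms(1) ordered_complex_def by blast
  then have finK: "finite K" and simpK: "\<forall>S\<in>K. \<exists>n. n simplex S"
    unfolding simplicial_complex_def by auto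
  have nice: "nice_subcomplex (cryst_subdiv K r l) (complex_restrict (cryst_subdiv K r l) (U i))" for l i
    unfolding nice_subcomplex_def
  proof
    fix D assume "D \<in> complex_star (cryst_subdiv K r l) (complex_restrict (cryst_subdiv K r l) (U i))"
    then obtain D' where D': "D' \<in> cryst_subdiv K r l" "D face_of D'" unfolding complex_star_def by blast
    then obtain S0 T where ST: "S0 \<in> K" "T \<in> cryst_pieces r l S0" "D' face_of T"
      unfolding cryst_subdiv_def by blast
    have DT: "D face_of T" using D'(2) ST(3) face_of_trans by blast
    obtain n where "n simplex S0" using simpK ST(1) by blast
    then obtain P where P: "\<not> affine_dependent P" "T = convex hull P" using piece_indep ST(2) by blast
    obtain F where F: "F face_of D" "{G. G face_of D \<and> G \<subseteq> U i} = {G. G face_of F}"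
      using nice_piece[OF P(1) _ assms(3)[of i], of D] DT P(2) by blast
    have "simplex_meet D (complex_restrict (cryst_subdiv K r l) (U i)) = {G. G face_of D \<and> G \<subseteq> U i}"
      unfolding simplex_meet_def complex_restrict_def cryst_subdiv_def
      using DT ST(1,2) face_of_trans by blast
    then show "\<exists>F. F face_of D \<and> simplex_meet D (complex_restrict (cryst_subdiv K r l) (U i)) = {G. G face_of F}"
      using F by (intro exI[of _ F] conjI) simp_all
  qed
  have "compact (\<Union>K)"
  proof (rule compact_Union[OF finK])
    fix S assume "S \<in> K"
    then obtain n where "n simplex S" using simpK by blast
    then obtain C where "finite C" "S = convex hull C" unfolding simplex by blast
    then show "compact S" by (simp add: compact_convex_hull finite_imp_compact)
  qed
  then obtain B where B: "\<forall>x\<in>\<Union>K. norm x \<le> B" using compact_imp_bounded bounded_iff by metis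
  obtain M where M: "\<forall>S\<in>K. card (simplex_vertices S) \<le> M"
    using finite_nat_set_iff_bounded_le[of "(\<lambda>S. card (simplex_vertices S)) ` K"] finK by auto
  define R where "R = (1 + 2 * real M) * B"
  obtain \<epsilon> where e: "0 < \<epsilon>" "\<And>x. x \<in> cball 0 R \<Longrightarrow> \<exists>G \<in> range U. ball x \<epsilon> \<subseteq> G"
    using Heine_Borel_lemma[of "cball 0 R" "range U"] assms(2,4) by auto
  obtain L where L: "2 * real M * \<bar>B\<bar> / \<epsilon> < 2 ^ L" using real_arch_pow[of 2] by fastforce
  show ?thesis
  proof (intro exI allI impI conjI)
    fix l i assume "L \<le> l"
    show "nice_subcomplex (cryst_subdiv K r l) (complex_restrict (cryst_subdiv K r l) (U i))" by (rule nice)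
  next
    fix l assume l: "L \<le> l"
    show "\<forall>S\<in>cryst_subdiv K r l. \<exists>i. S \<in> complex_restrict (cryst_subdiv K r l) (U i)"
    proof
      fix S assume S: "S \<in> cryst_subdiv K r l"
      then obtain S0 T where ST: "S0 \<in> K" "T \<in> cryst_pieces r l S0" "S face_of T"
        unfolding cryst_subdiv_def by blast
      obtain n where n: "n simplex S0" using simpK ST(1) by blast
      obtain c where c: "norm c \<le> R" "T \<subseteq> cball c (2 * real M * B / 2 ^ l)"
        using piece_bound[OF n _ _ ST(2), of B M] B M ST(1) R_def by fastforce
      obtain i where i: "ball c \<epsilon> \<subseteq> U i" using e(2)[of c] c(1) by auto
      have "2 * real M * B / 2 ^ l < \<epsilon>"
      proof -
        have "2 * real M * B \<le> 2 * real M * \<bar>B\<bar>" by (simp add: mult_left_mono)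
        also have "\<dots> < \<epsilon> * 2 ^ L" using L e(1) by (simp add: divide_less_eq mult.commute)
        also have "\<dots> \<le> \<epsilon> * 2 ^ l" using l e(1) by (simp add: power_increasing)
        finally show ?thesis by (simp add: divide_less_eq)
      qed
      then have "cball c (2 * real M * B / 2 ^ l) \<subseteq> ball c \<epsilon>" by (simp add: subset_eq)
      then have "S \<subseteq> U i" using face_of_imp_subset[OF ST(3)] c(2) i by blast
      then show "\<exists>i. S \<in> complex_restrict (cryst_subdiv K r l) (U i)"
        using S unfolding complex_restrict_def by blast
    qed
  qed
qed

end
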